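(* Suppose Assumptions A1, A2 (SDSD) and A3 hold for a given steady state $(x^s,u^s)$ and $\gamma\in(0,1)$. Then $(x^s,u^s)$ is a minimizer of the optimal steady-state problem $$\min_{x,u}\ \tilde L^\gamma(x,u)\quad\text{s.t.}\quad x=f(x,u),$$ where $\tilde L^\gamma(x,u):=L(x,u)+(\gamma-1)V_\star^\gamma(f(x,u))$.
   Context: Setting: discrete-time system $x_+=f(x,u)$ with $x\in\mathbb{R}^{n_x}$, $u\in\mathbb{R}^{n_u}$, stage cost $L(x,u)$, constraint set $\mathbb{Z}:=\{(x,u): h(x,u)\le 0\}$, with the convention $L(x,u)=\infty$ for $(x,u)\notin\mathbb{Z}$, and discount factor $\gamma\in(0,1)$. For a policy $\pi$ the closed-loop trajectory is $x_{k+1}^\pi=f(x_k^\pi,\pi(x_k^\pi))$, $x_0^\pi=x_0$. $\mathbb{X}_0:=\{x_0:\exists\pi \text{ with } h(x_k^\pi,\pi(x_k^\pi))\le0\ \forall k\ge0\}$ and $\Pi:=\{\pi: h(x_k^\pi,\pi(x_k^\pi))\le 0\ \forall x_0\in\mathbb{X}_0,\forall k\ge 0\}$. The optimal value function is $V_\star^\gamma(x_0):=\min_{\pi\in\Pi}\sum_{k=0}^\infty\gamma^kL(x_k^\pi,\pi(x_k^\pi))$ and $\pi_\star^\gamma$ denotes an optimal policy. $(x^s,u^s)$ is a steady state, $x^s=f(x^s,u^s)$, normalized so that $L(x^s,u^s)=0$. Assumption A1: $\mathbb{Z}$ and $\mathbb{X}_0$ are compact and $|L(x,u)|<\infty$ for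 all $(x,u)\in\mathbb{Z}$. Assumption A2 (Strong Discounted Strict Dissipativity, SDSD): there exist a function $\lambda$, continuous at $x^s$, bounded on bounded sets, with $\lambda(x^s)=0$, and $\rho\in\mathcal{K}$ such that for all $(x,u)\in\mathbb{Z}$: (i) $L(x,u)+\lambda(x)-\gamma\lambda(f(x,u))\ge\rho(\|x-x^s\|)$; (ii) $L(x,u)+\lambda(x)-\lambda(f(x,u))+(\gamma-1)V_\star^\gamma(f(x,u))\ge\rho(\|x-x^s\|)$. Assumption A3: $V_\star^\gamma$ is continuous at $x^s$ and bounded on $\mathbb{X}_0$. $\mathcal{K}$ denotes continuous, strictly increasing functions $\mathbb{R}_{\ge0}\to\mathbb{R}_{\ge0}$ vanishing at $0$. *)

theory Defs
  imports "HOL-Analysis.Analysis"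
begin

fun traj :: "('x \<Rightarrow> 'u \<Rightarrow> 'x) \<Rightarrow> ('x \<Rightarrow> 'u) \<Rightarrow> 'x \<Rightarrow> nat \<Rightarrow> 'x" where
  "traj f p x0 0 = x0"
| "traj f p x0 (Suc k) = f (traj f p x0 k) (p (traj f p x0 k))"

definition Zset :: "('x \<Rightarrow> 'u \<Rightarrow> real^'c) \<Rightarrow> ('x \<times> 'u) set" where
  "Zset h = {(x, u). h x u \<le> 0}"

definition X0set :: "('x \<Rightarrow> 'u \<Rightarrow> 'x) \<Rightarrow> ('x \<Rightarrow> 'u \<Rightarrow> real^'c) \<Rightarrow> 'x set" where
  "X0set f h = {x0. \<exists>p. \<forall>k. h (traj f p x0 k) (p (traj f p x0 k)) \<le> 0}"

definition Pol :: "('x \<Rightarrow> 'u \<Rightarrow> 'x) \<Rightarrow> ('x \<Rightarrow> 'u \<Rightarrow> real^'c) \<Rightarrow> ('x \<Rightarrow> 'u) set" where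
  "Pol f h = {p. \<forall>x0\<in>X0set f h. \<forall>k. h (traj f p x0 k) (p (traj f p x0 k)) \<le> 0}"

definition cost_seq :: "('x \<Rightarrow> 'u \<Rightarrow> 'x) \<Rightarrow> ('x \<Rightarrow> 'u \<Rightarrow> real) \<Rightarrow> real \<Rightarrow> ('x \<Rightarrow> 'u) \<Rightarrow> 'x \<Rightarrow> nat \<Rightarrow> real" where
  "cost_seq f L \<gamma> p x0 k = \<gamma> ^ k * L (traj f p x0 k) (p (traj f p x0 k))"

definition cost :: "('x \<Rightarrow> 'u \<Rightarrow> 'x) \<Rightarrow> ('x \<Rightarrow> 'u \<Rightarrow> real) \<Rightarrow> real \<Rightarrow> ('x \<Rightarrow> 'u) \<Rightarrow> 'x \<Rightarrow> real" where
  "cost f L \<gamma> p x0 = (\<Sum>k. cost_seq f L \<gamma> p x0 k)"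

text \<open>Optimal value function V_star^gamma (infimum over admissible policies with
  convergent cost; under the well-posedness assumption below this is a minimum).\<close>
definition Vstar :: "('x \<Rightarrow> 'u \<Rightarrow> 'x) \<Rightarrow> ('x \<Rightarrow> 'u \<Rightarrow> real^'c) \<Rightarrow> ('x \<Rightarrow> 'u \<Rightarrow> real) \<Rightarrow> real \<Rightarrow> 'x \<Rightarrow> real" where
  "Vstar f h L \<gamma> x0 = Inf {cost f L \<gamma> p x0 | p. p \<in> Pol f h \<and> summable (cost_seq f L \<gamma> p x0)}"

definition optimal_policy :: "('x \<Rightarrow> 'u \<Rightarrow> 'x) \<Rightarrow> ('x \<Rightarrow> 'u \<Rightarrow> real^'c) \<Rightarrow> ('x \<Rightarrow> 'u \<Rightarrow> real) \<Rightarrow> real \<Rightarrow> ('x \<Rightarrow> 'u) \<Rightarrow> bool" where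
  "optimal_policy f h L \<gamma> ps \<longleftrightarrow> ps \<in> Pol f h \<and>
     (\<forall>x0\<in>X0set f h. summable (cost_seq f L \<gamma> ps x0) \<and>
        (\<forall>p\<in>Pol f h. summable (cost_seq f L \<gamma> p x0) \<longrightarrow> cost f L \<gamma> ps x0 \<le> cost f L \<gamma> p x0))"

definition classK :: "(real \<Rightarrow> real) \<Rightarrow> bool" where
  "classK \<rho> \<longleftrightarrow> continuous_on {0..} \<rho> \<and> strict_mono_on {0..} \<rho> \<and> \<rho> 0 = 0 \<and> (\<forall>r\<ge>0. \<rho> r \<ge> 0)"

end

theory Submission
  imports Defs
begin

theorem theorem4:
  fixes f :: "real^'n \<Rightarrow> real^'m \<Rightarrow> real^'n"
    and L :: "real^'n \<Rightarrow> real^'m \<Rightarrow> real"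
    and h :: "real^'n \<Rightarrow> real^'m \<Rightarrow> real^'c"
    and \<gamma> :: real and xs :: "real^'n" and us :: "real^'m"
  defines "V \<equiv> Vstar f h L \<gamma>"
  assumes gamma: "0 < \<gamma>" "\<gamma> < 1"
    and steady: "xs = f xs us"
    and xs_feas: "(xs, us) \<in> Zset h"
    and normal: "L xs us = 0"
    and opt: "\<exists>ps. optimal_policy f h L \<gamma> ps"
    \<comment> \<open>A1\<close>
    and A1: "compact (Zset h)" "compact (X0set f h)"
    \<comment> \<open>A2 (SDSD)\<close>
    and A2: "\<exists>lam :: real^'n \<Rightarrow> real. \<exists>\<rho>.
       isCont lam xs \<and> (\<forall>S. bounded S \<longrightarrow> bounded (lam ` S)) \<and> lam xs = 0 \<and> classK \<rho> \<and>
       (\<forall>(x, u)\<in>Zset h. L x u + lam x - \<gamma> * lam (f x u) \<ge> \<rho> (norm (x - xs))) \<and>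
       (\<forall>(x, u)\<in>Zset h. f x u \<in> X0set f h \<longrightarrow>
          L x u + lam x - lam (f x u) + (\<gamma> - 1) * V (f x u) \<ge> \<rho> (norm (x - xs)))"
    \<comment> \<open>A3\<close>
    and A3: "continuous (at xs within X0set f h) V" "bounded (V ` X0set f h)"
  shows "\<forall>(x, u)\<in>Zset h. x = f x u \<longrightarrow>
           L xs us + (\<gamma> - 1) * V (f xs us) \<le> L x u + (\<gamma> - 1) * V (f x u)"
proof -
  obtain lam :: "real^'n \<Rightarrow> real" and \<rho> where
    lb: "\<forall>S. bounded S \<longrightarrow> bounded (lam ` S)" and l0: "lam xs = 0" and K: "classK \<rho>"
    and d1: "\<forall>(x, u)\<in>Zset h. L x u + lam x - \<gamma> * lam (f x u) \<ge> \<rho> (norm (x - xs))"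
    and d2: "\<forall>(x, u)\<in>Zset h. f x u \<in> X0set f h \<longrightarrow>
          L x u + lam x - lam (f x u) + (\<gamma> - 1) * V (f x u) \<ge> \<rho> (norm (x - xs))"
    using A2 by blast
  have rho0: "\<And>r. r \<ge> 0 \<Longrightarrow> \<rho> r \<ge> 0" using K unfolding classK_def by blast
  have steadyX0: "x \<in> X0set f h" if "(x, u) \<in> Zset h" "x = f x u" for x u
  proof -
    have tr: "traj f (\<lambda>_. u) x k = x" for k
      by (induction k) (use that in auto)
    show ?thesis unfolding X0set_def using that(1) tr
      by (auto simp: Zset_def intro!: exI[of _ "\<lambda>_. u"])
  qed
  have xsX0: "xs \<in> X0set f h" using steadyX0[OF xs_feas steady] .
  have bZ: "bounded (fst ` Zset h)" using A1(1) by (simp add: compact_imp_bounded bounded_fst)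
  then obtain B where B: "\<And>y. y \<in> fst ` Zset h \<Longrightarrow> \<bar>lam y\<bar> \<le> B"
    using lb by (metis bounded_real imageI)
  have costnn: "cost f L \<gamma> p xs \<ge> 0" if p: "p \<in> Pol f h" and sm: "summable (cost_seq f L \<gamma> p xs)" for p
  proof -
    define t where "t = traj f p xs"
    have tZ: "(t k, p (t k)) \<in> Zset h" for k
      using p xsX0 unfolding Pol_def Zset_def t_def by auto
    have tS: "t (Suc k) = f (t k) (p (t k))" for k unfolding t_def by simp
    have low: "(\<Sum>k<N. cost_seq f L \<gamma> p xs k) \<ge> - (\<gamma> ^ N * B)" for N
    proof -
      have "\<gamma> ^ k * L (t k) (p (t k)) \<ge> \<gamma> ^ Suc k * lam (t (Suc k)) - \<gamma> ^ k * lam (t k)" for k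
      proof -
        have "L (t k) (p (t k)) + lam (t k) - \<gamma> * lam (t (Suc k)) \<ge> \<rho> (norm (t k - xs))"
          using d1 tZ[of k] tS[of k] by auto
        moreover have "\<rho> (norm (t k - xs)) \<ge> 0" using rho0 by simp
        ultimately have "L (t k) (p (t k)) \<ge> \<gamma> * lam (t (Suc k)) - lam (t k)" by linarith
        hence "\<gamma> ^ k * L (t k) (p (t k)) \<ge> \<gamma> ^ k * (\<gamma> * lam (t (Suc k)) - lam (t k))"
          using gamma by (intro mult_left_mono) auto
        thus ?thesis by (simp add: algebra_simps)
      qed
      hence "(\<Sum>k<N. cost_seq f L \<gamma> p xs k) \<ge> (\<Sum>k<N. \<gamma> ^ Suc k * lam (t (Suc k)) - \<gamma> ^ k * lam (t k))"
        unfolding cost_seq_def t_def[symmetric] by (intro sum_mono) auto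
      also have "(\<Sum>k<N. \<gamma> ^ Suc k * lam (t (Suc k)) - \<gamma> ^ k * lam (t k)) = \<gamma> ^ N * lam (t N) - lam (t 0)"
        using sum_lessThan_telescope[where f = "\<lambda>k. \<gamma> ^ k * lam (t k)" and m = N]
        by (simp only: power_0 mult_1)
      also have "lam (t 0) = 0" using l0 by (simp add: t_def)
      finally have c: "(\<Sum>k<N. cost_seq f L \<gamma> p xs k) \<ge> \<gamma> ^ N * lam (t N) - 0" .
      have "\<bar>lam (t N)\<bar> \<le> B" using B tZ[of N] by force
      hence "- B \<le> lam (t N)" by linarith
      hence "\<gamma> ^ N * (- B) \<le> \<gamma> ^ N * lam (t N)" using gamma by (intro mult_left_mono) auto
      thus ?thesis using c by simp
    qed
    have "(\<lambda>N. - (\<gamma> ^ N * B)) \<longlonglongrightarrow> - (0 * B)"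
      using gamma by (intro tendsto_intros LIMSEQ_power_zero) auto
    moreover have "(\<lambda>N. \<Sum>k<N. cost_seq f L \<gamma> p xs k) \<longlonglongrightarrow> cost f L \<gamma> p xs"
      using sm unfolding cost_def by (simp add: summable_LIMSEQ)
    ultimately have "- (0 * B) \<le> cost f L \<gamma> p xs"
      using low by (intro LIMSEQ_le[of "\<lambda>N. - (\<gamma> ^ N * B)" _ "\<lambda>N. \<Sum>k<N. cost_seq f L \<gamma> p xs k"]) auto
    thus ?thesis by simp
  qed
  obtain ps where ps: "optimal_policy f h L \<gamma> ps" using opt by blast
  have Vnn: "V xs \<ge> 0"
    unfolding V_def Vstar_def
  proof (rule cInf_greatest)
    show "{cost f L \<gamma> p xs |p. p \<in> Pol f h \<and> summable (cost_seq f L \<gamma> p xs)} \<noteq> {}"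
      using ps xsX0 unfolding optimal_policy_def by blast
  qed (use costnn in blast)
  show ?thesis
  proof (intro ballI impI, clarify)
    fix x u assume xu: "(x, u) \<in> Zset h" and st: "x = f x u"
    have "x \<in> X0set f h" using steadyX0[OF xu st] .
    hence "L x u + lam x - lam (f x u) + (\<gamma> - 1) * V (f x u) \<ge> \<rho> (norm (x - xs))"
      using d2 xu st by auto
    moreover have "\<rho> (norm (x - xs)) \<ge> 0" using rho0 by simp
    ultimately have "L x u + (\<gamma> - 1) * V (f x u) \<ge> 0" using st by simp
    moreover have "(\<gamma> - 1) * V xs \<le> 0" using Vnn gamma by (simp add: mult_nonpos_nonneg)
    ultimately show "L xs us + (\<gamma> - 1) * V (f xs us) \<le> L x u + (\<gamma> - 1) * V (f x u)"
      using normal steady[symmetric] by simp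
  qed
qed

end
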